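(* Let $\Gamma$ be a simplicial complex on the vertex set $V_1=\{x_1,\ldots,x_n\}$, and let $\Gamma_1,\ldots,\Gamma_m$ ($m\geq1$) be simplicial subcomplexes of $\Gamma$ with $\Gamma=\bigcup_{j=1}^m\Gamma_j$ (some $\Gamma_j$ may equal $\{\varnothing\}$). Let $y_1,\ldots,y_m$ be new vertices and define \[\widetilde\Gamma=\left\{\sigma\cup\tau:\ \sigma\in\Gamma,\ \tau\subseteq\{y_j:\sigma\in\Gamma_j\}\right\}.\] Then $\widetilde\Gamma$ is contractible.
   Context: Simplicial complexes contain the empty face; $\widetilde\Gamma$ is a simplicial complex on $V_1\cup\{y_1,\ldots,y_m\}$, and contractibility refers to its geometric realization. *)

theory Defs
  imports "HOL-Analysis.Analysis"
begin

definition simplicial_complex :: "'v set \<Rightarrow> 'v set set \<Rightarrow> bool" where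
  "simplicial_complex V K \<longleftrightarrow>
     finite V \<and> (\<forall>\<sigma>\<in>K. \<sigma> \<subseteq> V) \<and> {} \<in> K \<and> (\<forall>\<sigma>\<in>K. \<forall>\<tau>. \<tau> \<subseteq> \<sigma> \<longrightarrow> \<tau> \<in> K)"

definition geom_realization :: "'v set set \<Rightarrow> ('v \<Rightarrow> real) set" where
  "geom_realization K =
     {f. (\<forall>v. 0 \<le> f v) \<and> {v. f v \<noteq> 0} \<in> K \<and> sum f {v. f v \<noteq> 0} = 1}"

definition geom_top :: "'v set set \<Rightarrow> ('v \<Rightarrow> real) topology" where
  "geom_top K = subtopology (powertop_real UNIV) (geom_realization K)"

text \<open>The complex \<Gamma>~ on vertex set V1 \<union> {y_1..y_m}: old vertices x are Inl x,
new vertex y_j is Inr j.\<close>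
definition cone_ext :: "'a set set \<Rightarrow> (nat \<Rightarrow> 'a set set) \<Rightarrow> nat \<Rightarrow> ('a + nat) set set" where
  "cone_ext \<Gamma> \<Gamma>s m =
     {Inl ` \<sigma> \<union> Inr ` \<tau> | \<sigma> \<tau>. \<sigma> \<in> \<Gamma> \<and> \<tau> \<subseteq> {j \<in> {1..m}. \<sigma> \<in> \<Gamma>s j}}"

end

theory Submission
  imports Defs
begin

lemma topspace_geom_top[simp]: "topspace (geom_top K) = geom_realization K"
  by (simp add: geom_top_def)

lemma cont_coord: "continuous_map (geom_top K) euclideanreal (\<lambda>f. f v)"
  unfolding geom_top_def
  by (rule continuous_map_from_subtopology) (rule continuous_map_product_projection, simp)

lemma sum_supp_eq:
  fixes f :: "'v \<Rightarrow> real"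
  assumes "finite U" "{v. f v \<noteq> 0} \<subseteq> U"
  shows "sum f {v. f v \<noteq> 0} = sum f U"
  by (rule sum.mono_neutral_left) (use assms in auto)

lemma straight_line:
  assumes fin: "\<And>F. F \<in> K \<Longrightarrow> finite F"
    and down: "\<And>F G. F \<in> K \<Longrightarrow> G \<subseteq> F \<Longrightarrow> G \<in> K"
    and p: "continuous_map X (geom_top K) p" and q: "continuous_map X (geom_top K) q"
    and supp: "\<And>x. x \<in> topspace X \<Longrightarrow> \<exists>F\<in>K. {v. p x v \<noteq> 0} \<union> {v. q x v \<noteq> 0} \<subseteq> F"
  shows "homotopic_with (\<lambda>_. True) X (geom_top K) p q"
  unfolding homotopic_with_def
proof (intro exI conjI allI ballI)
  define h where "h = (\<lambda>(t::real,x). \<lambda>v. (1-t) * p x v + t * q x v)"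
  show "h (0, x) = p x" for x by (simp add: h_def)
  show "h (1, x) = q x" for x by (simp add: h_def)
  show "True" by simp
  have pin: "p x \<in> geom_realization K" if "x \<in> topspace X" for x
    using continuous_map_image_subset_topspace[OF p] that by auto
  have qin: "q x \<in> geom_realization K" if "x \<in> topspace X" for x
    using continuous_map_image_subset_topspace[OF q] that by auto
  have "continuous_map (prod_topology (top_of_set {0..1}) X) (powertop_real UNIV) h"
    unfolding continuous_map_componentwise_UNIV h_def
  proof
    fix v
    have c1: "continuous_map (prod_topology (top_of_set {0..1}) X) euclideanreal (\<lambda>z. fst z)"
      by (metis continuous_map_fst continuous_map_in_subtopology)
    have c2: "continuous_map (prod_topology (top_of_set {0..1}) X) euclideanreal (\<lambda>z. p (snd z) v)"
      using continuous_map_compose[OF continuous_map_compose[OF continuous_map_snd p] cont_coord]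
      by (simp add: o_def)
    have c3: "continuous_map (prod_topology (top_of_set {0..1}) X) euclideanreal (\<lambda>z. q (snd z) v)"
      using continuous_map_compose[OF continuous_map_compose[OF continuous_map_snd q] cont_coord]
      by (simp add: o_def)
    show "continuous_map (prod_topology (top_of_set {0..1}) X) euclideanreal (\<lambda>x. (case x of (t, x) \<Rightarrow> \<lambda>v. (1 - t) * p x v + t * q x v) v)"
      unfolding case_prod_unfold
      by (intro continuous_map_add continuous_map_real_mult continuous_map_diff c1 c2 c3 continuous_map_canonical_const)
  qed
  moreover have "h z \<in> geom_realization K" if "z \<in> topspace (prod_topology (top_of_set {0..1}) X)" for z
  proof -
    obtain t x where z: "z = (t,x)" by fastforce
    have t: "t \<in> {0..1}" and x: "x \<in> topspace X"
      using that z by auto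
    obtain F where F: "F \<in> K" "{v. p x v \<noteq> 0} \<union> {v. q x v \<noteq> 0} \<subseteq> F" using supp[OF x] by blast
    have finF: "finite F" using fin F(1) by blast
    have sp: "\<forall>v. 0 \<le> p x v" "sum (p x) {v. p x v \<noteq> 0} = 1"
      and sq: "\<forall>v. 0 \<le> q x v" "sum (q x) {v. q x v \<noteq> 0} = 1"
      using pin[OF x] qin[OF x] by (auto simp: geom_realization_def)
    have sub: "{v. h z v \<noteq> 0} \<subseteq> F"
    proof
      fix v assume "v \<in> {v. h z v \<noteq> 0}"
      then have "p x v \<noteq> 0 \<or> q x v \<noteq> 0" by (auto simp: h_def z)
      then show "v \<in> F" using F(2) by auto
    qed
    have "sum (h z) {v. h z v \<noteq> 0} = sum (h z) F"
      by (rule sum_supp_eq[OF finF sub])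
    also have "\<dots> = (1-t) * sum (p x) F + t * sum (q x) F"
      by (simp add: h_def z sum.distrib sum_distrib_left)
    also have "sum (p x) F = 1" using sp(2) sum_supp_eq[OF finF, of "p x"] F(2) by auto
    also have "sum (q x) F = 1" using sq(2) sum_supp_eq[OF finF, of "q x"] F(2) by auto
    finally have s1: "sum (h z) {v. h z v \<noteq> 0} = 1" by simp
    have nn: "\<forall>v. 0 \<le> h z v" using t sp(1) sq(1) by (simp add: h_def z)
    show ?thesis using s1 nn down[OF F(1) sub] by (simp add: geom_realization_def)
  qed
  ultimately show "continuous_map (prod_topology (top_of_set {0..1}) X) (geom_top K) h"
    unfolding geom_top_def by (auto simp: continuous_map_in_subtopology)
qed


lemma cont_Min:
  fixes g :: "'b \<Rightarrow> 'x \<Rightarrow> real"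
  assumes "finite A" "A \<noteq> {}" "\<And>a. a \<in> A \<Longrightarrow> continuous_map X euclideanreal (g a)"
  shows "continuous_map X euclideanreal (\<lambda>x. Min ((\<lambda>a. g a x) ` A))"
  using assms
proof (induction A rule: finite_ne_induct)
  case (singleton a) then show ?case by simp
next
  case (insert a F)
  have "(\<lambda>x. Min ((\<lambda>a. g a x) ` insert a F)) = (\<lambda>x. min (g a x) (Min ((\<lambda>a. g a x) ` F)))"
    using insert by (simp add: Min_insert)
  then show ?case using insert by (simp add: continuous_map_real_min)
qed

lemma cont_Max0:
  fixes g :: "'b \<Rightarrow> 'x \<Rightarrow> real"
  assumes "finite A" "\<And>a. a \<in> A \<Longrightarrow> continuous_map X euclideanreal (g a)"
  shows "continuous_map X euclideanreal (\<lambda>x. Max (insert 0 ((\<lambda>a. g a x) ` A)))"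
  using assms
proof (induction A rule: finite_induct)
  case empty then show ?case by simp
next
  case (insert a F)
  have "(\<lambda>x. Max (insert 0 ((\<lambda>a. g a x) ` insert a F))) = (\<lambda>x. max (g a x) (Max (insert 0 ((\<lambda>a. g a x) ` F))))"
  proof
    fix x
    have "insert 0 ((\<lambda>a. g a x) ` insert a F) = insert (g a x) (insert 0 ((\<lambda>a. g a x) ` F))" by auto
    then show "Max (insert 0 ((\<lambda>a. g a x) ` insert a F)) = max (g a x) (Max (insert 0 ((\<lambda>a. g a x) ` F)))"
      using insert(1) by (simp only: Max_insert finite_insert finite_imageI) simp
  qed
  then show ?case using insert by (simp add: continuous_map_real_max)
qed


locale cx =
  fixes V1 :: "'a set" and \<Gamma> :: "'a set set" and \<Gamma>s :: "nat \<Rightarrow> 'a set set" and m :: nat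
  assumes sc: "simplicial_complex V1 \<Gamma>"
    and m1: "m \<ge> 1"
    and scj: "\<And>j. j \<in> {1..m} \<Longrightarrow> simplicial_complex V1 (\<Gamma>s j) \<and> \<Gamma>s j \<subseteq> \<Gamma>"
    and un: "\<Gamma> = (\<Union>j\<in>{1..m}. \<Gamma>s j)"
begin

lemma sum_split: "G = Inl ` {x. Inl x \<in> G} \<union> Inr ` {j. Inr j \<in> G}"
  by (rule set_eqI, case_tac x) auto

abbreviation "K \<equiv> cone_ext \<Gamma> \<Gamma>s m"

definition S :: "'a set \<Rightarrow> nat set" where "S \<rho> = {j \<in> {1..m}. \<rho> \<in> \<Gamma>s j}"

lemma finV1: "finite V1" using sc by (simp add: simplicial_complex_def)
lemma G_sub: "\<sigma> \<in> \<Gamma> \<Longrightarrow> \<sigma> \<subseteq> V1" using sc by (auto simp: simplicial_complex_def)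
lemma G_down: "\<sigma> \<in> \<Gamma> \<Longrightarrow> \<rho> \<subseteq> \<sigma> \<Longrightarrow> \<rho> \<in> \<Gamma>" using sc by (auto simp: simplicial_complex_def)
lemma Gj_down: "j \<in> {1..m} \<Longrightarrow> \<sigma> \<in> \<Gamma>s j \<Longrightarrow> \<rho> \<subseteq> \<sigma> \<Longrightarrow> \<rho> \<in> \<Gamma>s j"
  using scj[of j] by (auto simp: simplicial_complex_def)
lemma Gj_empty: "j \<in> {1..m} \<Longrightarrow> {} \<in> \<Gamma>s j"
  using scj[of j] by (auto simp: simplicial_complex_def)
lemma S_anti: "\<rho> \<subseteq> \<sigma> \<Longrightarrow> S \<sigma> \<subseteq> S \<rho>" using Gj_down by (auto simp: S_def)
lemma S_sub: "S \<rho> \<subseteq> {1..m}" by (auto simp: S_def)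
lemma S_ne: "\<rho> \<in> \<Gamma> \<Longrightarrow> S \<rho> \<noteq> {}" using un by (auto simp: S_def)

lemma K_intro: "\<sigma> \<in> \<Gamma> \<Longrightarrow> \<tau> \<subseteq> S \<sigma> \<Longrightarrow> Inl ` \<sigma> \<union> Inr ` \<tau> \<in> K"
  unfolding cone_ext_def S_def by blast

lemma K_elim: assumes "F \<in> K"
  obtains \<sigma> \<tau> where "F = Inl ` \<sigma> \<union> Inr ` \<tau>" "\<sigma> \<in> \<Gamma>" "\<tau> \<subseteq> S \<sigma>"
  using assms unfolding cone_ext_def S_def by blast

lemma K_fin: "F \<in> K \<Longrightarrow> finite F"
  by (erule K_elim) (metis finite_Un finite_imageI finite_subset finite_atLeastAtMost G_sub finV1 S_sub)

lemma K_down: assumes "F \<in> K" "G \<subseteq> F" shows "G \<in> K"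
proof -
  obtain \<sigma> \<tau> where F: "F = Inl ` \<sigma> \<union> Inr ` \<tau>" "\<sigma> \<in> \<Gamma>" "\<tau> \<subseteq> S \<sigma>" using assms(1) by (rule K_elim)
  define \<sigma>' where "\<sigma>' = {x. Inl x \<in> G}"
  define \<tau>' where "\<tau>' = {j. Inr j \<in> G}"
  have G: "G = Inl ` \<sigma>' \<union> Inr ` \<tau>'"
    unfolding \<sigma>'_def \<tau>'_def by (rule sum_split)
  have s: "\<sigma>' \<subseteq> \<sigma>" "\<tau>' \<subseteq> \<tau>" using assms(2) F(1) unfolding \<sigma>'_def \<tau>'_def by auto
  show ?thesis unfolding G
    by (rule K_intro) (use G_down F s S_anti in blast)+
qed

definition sig :: "('a + nat \<Rightarrow> real) \<Rightarrow> 'a set" where "sig f = {x. f (Inl x) \<noteq> 0}"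
definition tau :: "('a + nat \<Rightarrow> real) \<Rightarrow> nat set" where "tau f = {j. f (Inr j) \<noteq> 0}"

lemma decomp:
  assumes "f \<in> geom_realization K"
  shows "{v. f v \<noteq> 0} = Inl ` sig f \<union> Inr ` tau f" "sig f \<in> \<Gamma>" "tau f \<subseteq> S (sig f)"
    "\<And>v. 0 \<le> f v" "sum f {v. f v \<noteq> 0} = 1"
proof -
  have sp: "{v. f v \<noteq> 0} \<in> K" using assms by (simp add: geom_realization_def)
  show e: "{v. f v \<noteq> 0} = Inl ` sig f \<union> Inr ` tau f"
    unfolding sig_def tau_def by (rule set_eqI, case_tac x) auto
  obtain \<sigma> \<tau> where F: "{v. f v \<noteq> 0} = Inl ` \<sigma> \<union> Inr ` \<tau>" "\<sigma> \<in> \<Gamma>" "\<tau> \<subseteq> S \<sigma>" using sp by (rule K_elim)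
  have "\<sigma> = sig f" "\<tau> = tau f" using F(1) unfolding sig_def tau_def by (auto simp: set_eq_iff image_iff)+
  then show "sig f \<in> \<Gamma>" "tau f \<subseteq> S (sig f)" using F by auto
  show "\<And>v. 0 \<le> f v" "sum f {v. f v \<noteq> 0} = 1" using assms by (auto simp: geom_realization_def)
qed


definition gap :: "('a + nat \<Rightarrow> real) \<Rightarrow> 'a set \<Rightarrow> real" where
  "gap f \<rho> = (if \<rho> = {} then 0 else
     max 0 (Min ((\<lambda>x. f (Inl x)) ` \<rho>) - Max (insert 0 ((\<lambda>x. f (Inl x)) ` (V1 - \<rho>)))))"

lemma gap_nn: "0 \<le> gap f \<rho>" by (simp add: gap_def)

lemma gap_pos:
  assumes "gap f \<rho> > 0" "\<rho> \<subseteq> V1"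
  shows "\<rho> \<noteq> {}" "\<And>x y. x \<in> \<rho> \<Longrightarrow> y \<in> V1 - \<rho> \<Longrightarrow> f (Inl y) < f (Inl x)"
    "\<And>x. x \<in> \<rho> \<Longrightarrow> 0 < f (Inl x)"
proof -
  show ne: "\<rho> \<noteq> {}" using assms by (auto simp: gap_def)
  have fr: "finite \<rho>" using assms(2) finV1 finite_subset by blast
  have lt: "Max (insert 0 ((\<lambda>x. f (Inl x)) ` (V1 - \<rho>))) < Min ((\<lambda>x. f (Inl x)) ` \<rho>)"
    using assms ne by (auto simp: gap_def split: if_splits)
  have mn: "Min ((\<lambda>x. f (Inl x)) ` \<rho>) \<le> f (Inl x)" if "x \<in> \<rho>" for x
    using fr that by (simp add: Min_le)
  have mx: "z \<le> Max (insert 0 ((\<lambda>x. f (Inl x)) ` (V1 - \<rho>)))" if "z \<in> insert 0 ((\<lambda>x. f (Inl x)) ` (V1 - \<rho>))" for z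
    using finV1 that by (intro Max_ge) auto
  show "\<And>x y. x \<in> \<rho> \<Longrightarrow> y \<in> V1 - \<rho> \<Longrightarrow> f (Inl y) < f (Inl x)"
    using mn mx lt by (meson insertI2 image_eqI less_le_trans le_less_trans)
  show "\<And>x. x \<in> \<rho> \<Longrightarrow> 0 < f (Inl x)"
    using mn mx lt by (meson insertI1 less_le_trans le_less_trans)
qed

lemma gap_chain:
  assumes "gap f \<rho> > 0" "gap f \<rho>' > 0" "\<rho> \<subseteq> V1" "\<rho>' \<subseteq> V1"
  shows "\<rho> \<subseteq> \<rho>' \<or> \<rho>' \<subseteq> \<rho>"
proof (rule ccontr)
  assume "\<not> ?thesis"
  then obtain x y where "x \<in> \<rho>" "x \<notin> \<rho>'" "y \<in> \<rho>'" "y \<notin> \<rho>" by blast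
  then have "f (Inl y) < f (Inl x)" "f (Inl x) < f (Inl y)"
    using gap_pos(2)[OF assms(1,3)] gap_pos(2)[OF assms(2,4)] assms(3,4) by blast+
  then show False by simp
qed

lemma gap_sig: "f \<in> geom_realization K \<Longrightarrow> gap f \<rho> > 0 \<Longrightarrow> \<rho> \<subseteq> V1 \<Longrightarrow> \<rho> \<subseteq> sig f"
  using gap_pos(3) by (fastforce simp: sig_def)

lemma gap_cont: "\<rho> \<subseteq> V1 \<Longrightarrow> continuous_map (geom_top K) euclideanreal (\<lambda>f. gap f \<rho>)"
proof (cases "\<rho> = {}")
  case True then show ?thesis by (simp add: gap_def)
next
  case False
  assume r: "\<rho> \<subseteq> V1"
  have fr: "finite \<rho>" using r finV1 finite_subset by blast
  have c1: "continuous_map (geom_top K) euclideanreal (\<lambda>f. Min ((\<lambda>x. f (Inl x)) ` \<rho>))"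
    by (rule cont_Min[OF fr False]) (rule cont_coord)
  have c2: "continuous_map (geom_top K) euclideanreal (\<lambda>f. Max (insert 0 ((\<lambda>x. f (Inl x)) ` (V1 - \<rho>))))"
    by (rule cont_Max0) (use finV1 cont_coord in auto)
  show ?thesis using False
    by (simp add: gap_def) (intro continuous_map_real_max continuous_map_diff c1 c2 continuous_map_canonical_const)
qed

lemma gap_exists:
  assumes f: "f \<in> geom_realization K" and ne: "sig f \<noteq> {}"
  shows "\<exists>\<rho>. \<rho> \<subseteq> sig f \<and> gap f \<rho> > 0"
proof -
  let ?a = "\<lambda>x. f (Inl x)"
  have sV: "sig f \<subseteq> V1" using decomp(2)[OF f] G_sub by blast
  obtain x0 where x0: "x0 \<in> sig f" using ne by blast
  have fx0: "0 < ?a x0" using x0 decomp(4)[OF f, of "Inl x0"] by (simp add: sig_def)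
  define M where "M = Max (?a ` V1)"
  have V1ne: "V1 \<noteq> {}" using x0 sV by blast
  have Mge: "?a x \<le> M" if "x \<in> V1" for x using finV1 that by (simp add: M_def)
  have Mpos: "0 < M" using Mge[of x0] x0 sV fx0 by force
  have "M \<in> ?a ` V1" unfolding M_def using finV1 V1ne by (intro Max_in) auto
  then obtain xm where xm: "xm \<in> V1" "?a xm = M" by auto
  define \<rho> where "\<rho> = {x \<in> V1. ?a x = M}"
  have rne: "\<rho> \<noteq> {}" using xm by (auto simp: \<rho>_def)
  have img: "?a ` \<rho> = {M}" using rne by (auto simp: \<rho>_def)
  have "Max (insert 0 (?a ` (V1 - \<rho>))) < M"
    using finV1 Mpos Mge by (subst Max_less_iff) (auto simp: \<rho>_def less_le)
  then have g: "gap f \<rho> > 0" using rne by (simp add: gap_def img)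
  have "\<rho> \<subseteq> sig f" using gap_sig[OF f g] by (auto simp: \<rho>_def)
  then show ?thesis using g by blast
qed


definition ind :: "('a + nat) set \<Rightarrow> 'a + nat \<Rightarrow> real" where "ind A v = (if v \<in> A then 1 else 0)"
definition ypart :: "('a + nat \<Rightarrow> real) \<Rightarrow> 'a + nat \<Rightarrow> real" where
  "ypart f v = (case v of Inl _ \<Rightarrow> 0 | Inr j \<Rightarrow> f (Inr j))"
definition term1 :: "nat \<Rightarrow> ('a + nat \<Rightarrow> real) \<Rightarrow> 'a + nat \<Rightarrow> 'a set \<Rightarrow> real" where
  "term1 k f v \<rho> = gap f \<rho> * (if card \<rho> \<le> k then ind (Inl ` \<rho>) v else ind (Inr ` S \<rho>) v)"
definition raw :: "nat \<Rightarrow> ('a + nat \<Rightarrow> real) \<Rightarrow> 'a + nat \<Rightarrow> real" where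
  "raw k f v = ypart f v + (\<Sum>\<rho>\<in>Pow V1. term1 k f v \<rho>)"
definition W :: "('a + nat) set" where "W = Inl ` V1 \<union> Inr ` {1..m}"
definition tot :: "nat \<Rightarrow> ('a + nat \<Rightarrow> real) \<Rightarrow> real" where "tot k f = sum (raw k f) W"
definition Q :: "nat \<Rightarrow> ('a + nat \<Rightarrow> real) \<Rightarrow> 'a + nat \<Rightarrow> real" where
  "Q k f = (\<lambda>v. raw k f v / tot k f)"
definition R :: "nat \<Rightarrow> ('a + nat \<Rightarrow> real) \<Rightarrow> 'a set" where
  "R k f = \<Union>{\<rho>\<in>Pow V1. gap f \<rho> > 0 \<and> card \<rho> \<le> k}"
definition Y :: "nat \<Rightarrow> ('a + nat \<Rightarrow> real) \<Rightarrow> nat set" where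
  "Y k f = tau f \<union> \<Union>(S ` {\<rho>\<in>Pow V1. gap f \<rho> > 0 \<and> k < card \<rho>})"

lemma finW: "finite W" using finV1 by (simp add: W_def)

lemma term1_nn: "0 \<le> term1 k f v \<rho>" by (simp add: term1_def ind_def gap_nn)

lemma ypart_nn: "f \<in> geom_realization K \<Longrightarrow> 0 \<le> ypart f v"
  using decomp(4) by (simp add: ypart_def split: sum.splits)

lemma raw_nn: "f \<in> geom_realization K \<Longrightarrow> 0 \<le> raw k f v"
  unfolding raw_def using ypart_nn term1_nn by (simp add: sum_nonneg)

lemma raw_ge_term: "f \<in> geom_realization K \<Longrightarrow> \<rho> \<subseteq> V1 \<Longrightarrow> term1 k f v \<rho> \<le> raw k f v"
proof -
  assume f: "f \<in> geom_realization K" and r: "\<rho> \<subseteq> V1"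
  have "term1 k f v \<rho> \<le> (\<Sum>\<rho>\<in>Pow V1. term1 k f v \<rho>)"
    using r finV1 term1_nn by (intro member_le_sum) auto
  then show ?thesis using ypart_nn[OF f, of v] by (simp add: raw_def)
qed

lemma raw_supp:
  assumes f: "f \<in> geom_realization K"
  shows "{v. raw k f v \<noteq> 0} \<subseteq> Inl ` R k f \<union> Inr ` Y k f"
proof
  fix v assume "v \<in> {v. raw k f v \<noteq> 0}"
  then have "ypart f v \<noteq> 0 \<or> (\<Sum>\<rho>\<in>Pow V1. term1 k f v \<rho>) \<noteq> 0" by (auto simp: raw_def)
  then show "v \<in> Inl ` R k f \<union> Inr ` Y k f"
  proof
    assume "ypart f v \<noteq> 0"
    then show ?thesis by (cases v) (auto simp: ypart_def Y_def tau_def)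
  next
    assume "(\<Sum>\<rho>\<in>Pow V1. term1 k f v \<rho>) \<noteq> 0"
    then obtain \<rho> where r: "\<rho> \<in> Pow V1" "term1 k f v \<rho> \<noteq> 0"
      by (meson sum.not_neutral_contains_not_neutral)
    then have g: "gap f \<rho> > 0" using gap_nn[of f \<rho>] by (auto simp: term1_def)
    show ?thesis
    proof (cases "card \<rho> \<le> k")
      case True
      then have "v \<in> Inl ` \<rho>" using r by (auto simp: term1_def ind_def split: if_splits)
      then show ?thesis using r g True by (auto simp: R_def)
    next
      case False
      then have "v \<in> Inr ` S \<rho>" using r by (auto simp: term1_def ind_def split: if_splits)
      then show ?thesis using r g False by (auto simp: Y_def)
    qed
  qed
qed

lemma R_sig: "f \<in> geom_realization K \<Longrightarrow> R k f \<subseteq> sig f"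
  using gap_sig by (auto simp: R_def)

lemma Y_sub: "f \<in> geom_realization K \<Longrightarrow> Y k f \<subseteq> {1..m}"
  using decomp(3) S_sub by (fastforce simp: Y_def)

lemma RY_face:
  assumes f: "f \<in> geom_realization K" and k: "k1 \<le> Suc k2"
  shows "Inl ` R k1 f \<union> Inr ` Y k2 f \<in> K"
proof (rule K_intro)
  have sG: "sig f \<in> \<Gamma>" using decomp(2)[OF f] .
  show RG: "R k1 f \<in> \<Gamma>" using G_down[OF sG R_sig[OF f]] .
  show "Y k2 f \<subseteq> S (R k1 f)"
  proof
    fix j assume "j \<in> Y k2 f"
    then consider "j \<in> tau f" | \<rho> where "\<rho> \<subseteq> V1" "gap f \<rho> > 0" "k2 < card \<rho>" "j \<in> S \<rho>"
      by (auto simp: Y_def)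
    then show "j \<in> S (R k1 f)"
    proof cases
      case 1 then show ?thesis using decomp(3)[OF f] S_anti[OF R_sig[OF f]] by blast
    next
      case 2
      have "R k1 f \<subseteq> \<rho>"
      proof
        fix x assume "x \<in> R k1 f"
        then obtain \<rho>' where r': "\<rho>' \<subseteq> V1" "gap f \<rho>' > 0" "card \<rho>' \<le> k1" "x \<in> \<rho>'"
          by (auto simp: R_def)
        have "\<rho>' \<subseteq> \<rho>"
        proof (rule ccontr)
          assume "\<not> \<rho>' \<subseteq> \<rho>"
          then have "\<rho> \<subset> \<rho>'" using gap_chain[OF 2(2) r'(2) 2(1) r'(1)] by blast
          then have "card \<rho> < card \<rho>'" using r'(1) finV1 by (meson finite_subset psubset_card_mono)
          then show False using 2(3) r'(3) k by linarith
        qed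
        then show "x \<in> \<rho>" using r'(4) by blast
      qed
      then show ?thesis using S_anti 2(4) by blast
    qed
  qed
qed

lemma R_mono: "k \<le> k' \<Longrightarrow> R k f \<subseteq> R k' f" by (auto simp: R_def)
lemma Y_mono: "k \<le> k' \<Longrightarrow> Y k' f \<subseteq> Y k f" by (auto simp: Y_def)

lemma raw_W: "f \<in> geom_realization K \<Longrightarrow> {v. raw k f v \<noteq> 0} \<subseteq> W"
proof -
  assume f: "f \<in> geom_realization K"
  have "R k f \<subseteq> V1" using R_sig[OF f] decomp(2)[OF f] G_sub by blast
  then show ?thesis using raw_supp[OF f, of k] Y_sub[OF f, of k] unfolding W_def by blast
qed


lemma tot_pos_of: "f \<in> geom_realization K \<Longrightarrow> v \<in> W \<Longrightarrow> 0 < raw k f v \<Longrightarrow> 0 < tot k f"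
proof -
  assume f: "f \<in> geom_realization K" and v: "v \<in> W" "0 < raw k f v"
  have "raw k f v \<le> tot k f" unfolding tot_def
    using finW v raw_nn[OF f] by (intro member_le_sum) auto
  then show ?thesis using v by linarith
qed

lemma tot_pos: assumes f: "f \<in> geom_realization K" shows "0 < tot k f"
proof (cases "tau f = {}")
  case False
  then obtain j where j: "j \<in> tau f" by blast
  then have jm: "j \<in> {1..m}" using decomp(3)[OF f] S_sub by blast
  have "0 < f (Inr j)" using j decomp(4)[OF f, of "Inr j"] by (auto simp: tau_def)
  moreover have "ypart f (Inr j) \<le> raw k f (Inr j)" using term1_nn
    by (simp add: raw_def sum_nonneg)
  ultimately have "0 < raw k f (Inr j)" by (simp add: ypart_def)
  moreover have "Inr j \<in> W" using jm by (simp add: W_def)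
  ultimately show ?thesis using tot_pos_of[OF f] by blast
next
  case True
  have "sig f \<noteq> {}"
  proof
    assume "sig f = {}"
    then have "{v. f v \<noteq> 0} = {}" using decomp(1)[OF f] True by simp
    then show False using decomp(5)[OF f] by simp
  qed
  then obtain \<rho> where r: "\<rho> \<subseteq> sig f" "gap f \<rho> > 0" using gap_exists[OF f] by blast
  have sV: "sig f \<subseteq> V1" using decomp(2)[OF f] G_sub by blast
  have rV: "\<rho> \<subseteq> V1" using r sV by blast
  have rne: "\<rho> \<noteq> {}" using gap_pos(1)[OF r(2) rV] .
  show ?thesis
  proof (cases "card \<rho> \<le> k")
    case True
    obtain x where x: "x \<in> \<rho>" using rne by blast
    have "term1 k f (Inl x) \<rho> = gap f \<rho>" using True x by (simp add: term1_def ind_def)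
    then have "0 < raw k f (Inl x)" using raw_ge_term[OF f rV, of k "Inl x"] r(2) by linarith
    moreover have "Inl x \<in> W" using x rV by (auto simp: W_def)
    ultimately show ?thesis using tot_pos_of[OF f] by blast
  next
    case False
    have "\<rho> \<in> \<Gamma>" using G_down[OF decomp(2)[OF f] r(1)] .
    then obtain j where j: "j \<in> S \<rho>" using S_ne by blast
    have "term1 k f (Inr j) \<rho> = gap f \<rho>" using False j by (simp add: term1_def ind_def)
    then have "0 < raw k f (Inr j)" using raw_ge_term[OF f rV, of k "Inr j"] r(2) by linarith
    moreover have "Inr j \<in> W" using j S_sub[of \<rho>] by (auto simp: W_def)
    ultimately show ?thesis using tot_pos_of[OF f] by blast
  qed
qed

lemma Q_supp: "f \<in> geom_realization K \<Longrightarrow> {v. Q k f v \<noteq> 0} = {v. raw k f v \<noteq> 0}"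
  using tot_pos[of f k] by (auto simp: Q_def)

lemma Q_in: assumes f: "f \<in> geom_realization K" shows "Q k f \<in> geom_realization K"
proof -
  have tp: "0 < tot k f" using tot_pos[OF f] .
  have nn: "\<forall>v. 0 \<le> Q k f v" using tp raw_nn[OF f] by (simp add: Q_def)
  have face: "{v. Q k f v \<noteq> 0} \<in> K"
    using K_down[OF RY_face[OF f, of k k] ] raw_supp[OF f, of k] Q_supp[OF f, of k] by simp
  have "sum (Q k f) {v. Q k f v \<noteq> 0} = sum (Q k f) W"
    using sum_supp_eq[OF finW, of "Q k f"] raw_W[OF f, of k] Q_supp[OF f, of k] by simp
  also have "\<dots> = tot k f / tot k f" by (simp add: Q_def tot_def sum_divide_distrib[symmetric])
  also have "\<dots> = 1" using tp by simp
  finally show ?thesis using nn face by (simp add: geom_realization_def)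
qed

lemma raw_cont: "continuous_map (geom_top K) euclideanreal (\<lambda>f. raw k f v)"
proof -
  have c1: "continuous_map (geom_top K) euclideanreal (\<lambda>f. ypart f v)"
    by (cases v) (simp_all add: ypart_def cont_coord)
  have c2: "continuous_map (geom_top K) euclideanreal (\<lambda>f. term1 k f v \<rho>)" if "\<rho> \<in> Pow V1" for \<rho>
    unfolding term1_def using gap_cont[of \<rho>] that
    by (intro continuous_map_real_mult continuous_map_canonical_const) auto
  show ?thesis unfolding raw_def
    by (intro continuous_map_add c1 continuous_map_sum) (use finV1 c2 in auto)
qed

lemma Q_cont: "continuous_map (geom_top K) (geom_top K) (Q k)"
proof -
  have "continuous_map (geom_top K) (powertop_real UNIV) (Q k)"
    unfolding continuous_map_componentwise_UNIV Q_def
  proof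
    fix v
    have ct: "continuous_map (geom_top K) euclideanreal (tot k)"
      unfolding tot_def by (intro continuous_map_sum) (use finW raw_cont in auto)
    have nz: "tot k x \<noteq> 0" if "x \<in> topspace (geom_top K)" for x
      using tot_pos[of x k] that by simp
    show "continuous_map (geom_top K) euclideanreal (\<lambda>x. raw k x v / tot k x)"
      by (intro continuous_map_real_divide raw_cont ct nz)
  qed
  then show ?thesis using Q_in unfolding geom_top_def
    by (auto simp: continuous_map_in_subtopology)
qed


lemma hom_start: "homotopic_with (\<lambda>_. True) (geom_top K) (geom_top K) id (Q (card V1))"
proof (rule straight_line[OF K_fin K_down continuous_map_id Q_cont])
  fix f assume "f \<in> topspace (geom_top K)"
  then have f: "f \<in> geom_realization K" by simp
  have Y: "Y (card V1) f = tau f"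
  proof -
    have "\<not> card V1 < card \<rho>" if "\<rho> \<subseteq> V1" for \<rho> using card_mono[OF finV1 that] by linarith
    then show ?thesis by (auto simp: Y_def)
  qed
  have "{v. Q (card V1) f v \<noteq> 0} \<subseteq> {v. f v \<noteq> 0}"
    using Q_supp[OF f] raw_supp[OF f, of "card V1"] R_sig[OF f, of "card V1"] decomp(1)[OF f] Y
    by blast
  then show "\<exists>F\<in>K. {v. id f v \<noteq> 0} \<union> {v. Q (card V1) f v \<noteq> 0} \<subseteq> F"
    using f by (intro bexI[of _ "{v. f v \<noteq> 0}"]) (auto simp: geom_realization_def)
qed

lemma hom_step: "homotopic_with (\<lambda>_. True) (geom_top K) (geom_top K) (Q (Suc k)) (Q k)"
proof (rule straight_line[OF K_fin K_down Q_cont Q_cont])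
  fix f assume "f \<in> topspace (geom_top K)"
  then have f: "f \<in> geom_realization K" by simp
  have "{v. Q (Suc k) f v \<noteq> 0} \<union> {v. Q k f v \<noteq> 0} \<subseteq> Inl ` R (Suc k) f \<union> Inr ` Y k f"
  proof -
    have i1: "Inl ` R k f \<subseteq> Inl ` R (Suc k) f" by (rule image_mono[OF R_mono]) simp
    have i2: "Inr ` Y (Suc k) f \<subseteq> Inr ` Y k f" by (rule image_mono[OF Y_mono]) simp
    show ?thesis unfolding Q_supp[OF f]
      by (rule Un_least; rule subset_trans[OF raw_supp[OF f]])
        (rule Un_mono[OF order_refl i2], rule Un_mono[OF i1 order_refl])
  qed
  then show "\<exists>F\<in>K. {v. Q (Suc k) f v \<noteq> 0} \<union> {v. Q k f v \<noteq> 0} \<subseteq> F"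
    using RY_face[OF f, of "Suc k" k] by (intro bexI) simp_all
qed

definition c0 :: "'a + nat \<Rightarrow> real" where "c0 = ind {Inr 1}"

lemma emptyG: "{} \<in> \<Gamma>" using sc by (simp add: simplicial_complex_def)
lemma S_empty: "S {} = {1..m}" using Gj_empty by (auto simp: S_def)

lemma c0_in: "c0 \<in> geom_realization K"
proof -
  have s: "{v. c0 v \<noteq> 0} = Inl ` {} \<union> Inr ` {1}" by (auto simp: c0_def ind_def)
  have "Inl ` {} \<union> Inr ` {1} \<in> K" using S_empty m1 by (intro K_intro[OF emptyG]) auto
  then show ?thesis using s by (simp add: geom_realization_def c0_def ind_def)
qed

lemma hom_end: "homotopic_with (\<lambda>_. True) (geom_top K) (geom_top K) (Q 0) (\<lambda>_. c0)"
proof (rule straight_line[OF K_fin K_down Q_cont])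
  show "continuous_map (geom_top K) (geom_top K) (\<lambda>_. c0)" using c0_in by simp
  fix f assume "f \<in> topspace (geom_top K)"
  then have f: "f \<in> geom_realization K" by simp
  have R0: "R 0 f = {}"
  proof -
    have "\<rho> = {}" if "\<rho> \<subseteq> V1" "gap f \<rho> > 0" "card \<rho> \<le> 0" for \<rho>
      using that finV1 finite_subset gap_pos(1)[OF that(2,1)] by fastforce
    then show ?thesis by (auto simp: R_def)
  qed
  have "{v. Q 0 f v \<noteq> 0} \<union> {v. c0 v \<noteq> 0} \<subseteq> Inl ` {} \<union> Inr ` {1..m}"
  proof -
    have i: "Inr ` Y 0 f \<subseteq> Inr ` {1..m}" by (rule image_mono[OF Y_sub[OF f]])
    have c: "{v. c0 v \<noteq> 0} = {Inr 1}" by (auto simp: c0_def ind_def)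
    have "Inr 1 \<in> Inr ` {1..m}" using m1 by simp
    moreover have "{v. raw 0 f v \<noteq> 0} \<subseteq> Inr ` {1..m}"
      using subset_trans[OF raw_supp[OF f, of 0]] i R0 by simp
    ultimately show ?thesis unfolding Q_supp[OF f] c by simp
  qed
  moreover have "Inl ` {} \<union> Inr ` {1..m} \<in> K" using K_intro[OF emptyG] S_empty by auto
  ultimately show "\<exists>F\<in>K. {v. Q 0 f v \<noteq> 0} \<union> {v. c0 v \<noteq> 0} \<subseteq> F" by blast
qed

lemma contractible: "contractible_space (geom_top K)"
proof -
  have "d \<le> card V1 \<Longrightarrow> homotopic_with (\<lambda>_. True) (geom_top K) (geom_top K) id (Q (card V1 - d))" for d
  proof (induction d)
    case 0 show ?case using hom_start by (simp only: diff_zero)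
  next
    case (Suc d)
    have h: "homotopic_with (\<lambda>_. True) (geom_top K) (geom_top K) id (Q (card V1 - d))"
      by (rule Suc.IH) (use Suc.prems in linarith)
    have e: "card V1 - d = Suc (card V1 - Suc d)" using Suc.prems by linarith
    from h have "homotopic_with (\<lambda>_. True) (geom_top K) (geom_top K) id (Q (Suc (card V1 - Suc d)))"
      by (simp only: e)
    then show ?case by (rule homotopic_with_trans) (rule hom_step)
  qed
  from this[of "card V1"] have "homotopic_with (\<lambda>_. True) (geom_top K) (geom_top K) id (Q 0)"
    by (simp only: diff_self_eq_0 order_refl simp_thms)
  then have "homotopic_with (\<lambda>_. True) (geom_top K) (geom_top K) id (\<lambda>_. c0)"
    by (rule homotopic_with_trans) (rule hom_end)
  then show ?thesis unfolding contractible_space_def by blast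
qed

end

theorem lemma4p2:
  fixes V1 :: "'a set" and \<Gamma> :: "'a set set" and \<Gamma>s :: "nat \<Rightarrow> 'a set set" and m :: nat
  assumes "simplicial_complex V1 \<Gamma>"
    and "m \<ge> 1"
    and "\<And>j. j \<in> {1..m} \<Longrightarrow> simplicial_complex V1 (\<Gamma>s j) \<and> \<Gamma>s j \<subseteq> \<Gamma>"
    and "\<Gamma> = (\<Union>j\<in>{1..m}. \<Gamma>s j)"
  shows "contractible_space (geom_top (cone_ext \<Gamma> \<Gamma>s m))"
proof -
  interpret cx V1 \<Gamma> \<Gamma>s m using assms by unfold_locales auto
  show ?thesis by (rule contractible)
qed

end
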